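(* Let $K$ be a field of characteristic zero, let $(p_\lambda(x_1,x_2,\ldots))_{\lambda\in\mathcal P}$ be a full sequence of symmetric functions over $K$, and let $F^{y}$ be a shift-invariant $K$-linear operator from symmetric functions in $x_1,x_2,\ldots$ to symmetric functions in $x_1,x_2,\ldots$ with coefficients polynomial in $y$, such that for every partition $\lambda$ $$F^{y}p_\lambda(x_1,x_2,\ldots)=\sum_{\alpha}p_\alpha(x_1,x_2,\ldots)\,p_{\lambda-\alpha}(y,0,0,\ldots),$$ the sum ranging over all integer vectors $\alpha$ with finite support. Then there is a nonzero constant $c\in K$ with $F^{y}=cE^{y}$; in other words, $(\frac1c p_\lambda)_{\lambda\in\mathcal P}$ is a full divided power sequence of symmetric functions.
   Context: A partition $\lambda$ is an eventually zero weakly decreasing sequence $\lambda_1\ge\lambda_2\ge\cdots$ of natural numbers; $\mathcal P$ is the set of partitions and $\mathcal P_n$ those with sum $|\lambda|=n$. The conjugate $\lambda'$ is given by $\lambda'_i=|\{j:\lambda_j\ge i\}|$. Reverse lexicographic order: $\alpha\ll\beta$ iff there is $i$ with $\alpha_i<\beta_i$ and $\alpha_j=\beta_j$ for all $j>i$. $m_\mu$ denotes the monomial symmetric function. A full sequence $(p_\lambda)_{\lambda\in\mathcal P}$ consists of symmetric functions with $p_\lambda$ homogeneous of degree $|\lambda|$ and $p_\lambda=\sum_{\mu\in\mathcal P_{|\lambda|},\ \mu=\lambda'\text{ or }\lambda'\ll\mu}b_{\lambda\mu}m_\mu$ with the coefficient $b_{\lambda\lambda'}$ of $m_{\lambda'}$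 nonzero. For an integer vector $\alpha$ with finite support: if all $\alpha_i\ge0$, $p_\alpha:=p_\lambda$ where $\lambda$ is the partition obtained by sorting $\alpha$; if some $\alpha_i<0$, $p_\alpha:=0$. The symmetric shift is $E^{a}q(x_1,x_2,\ldots)=q(a,x_1,x_2,\ldots)$ (for a scalar $a$ or an indeterminate $y$). An operator $\theta$ is shift-invariant if $E^a\theta=\theta E^a$ for all $a\in K$. A full divided power sequence is a full sequence satisfying $E^yp_\lambda(x_1,x_2,\ldots)=\sum_\alpha p_\alpha(x_1,x_2,\ldots)p_{\lambda-\alpha}(y,0,0,\ldots)$ for all $\lambda$. *)

theory Defs
  imports Main
begin

text \<open>Exponent vectors / monomials: a function e :: nat \<Rightarrow> nat with finite support
  encodes the monomial x_1^(e 0) x_2^(e 1) ...  (0-based indexing).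
  A symmetric function is represented by its coefficient function on monomials.
  Partitions are weakly decreasing finitely supported nat \<Rightarrow> nat, with
  lambda i standing for lambda_(i+1).\<close>

definition deg :: "(nat \<Rightarrow> nat) \<Rightarrow> nat" where
  "deg e = sum e {i. e i \<noteq> 0}"

definition is_partition :: "(nat \<Rightarrow> nat) \<Rightarrow> bool" where
  "is_partition l \<longleftrightarrow> (\<forall>i j. i \<le> j \<longrightarrow> l j \<le> l i) \<and> finite {i. l i \<noteq> 0}"

definition psize :: "(nat \<Rightarrow> nat) \<Rightarrow> nat" where
  "psize l = sum l {i. l i \<noteq> 0}"

definition conj_part :: "(nat \<Rightarrow> nat) \<Rightarrow> (nat \<Rightarrow> nat)" where
  "conj_part l = (\<lambda>i. card {j. Suc i \<le> l j})"

definition revlex :: "(nat \<Rightarrow> nat) \<Rightarrow> (nat \<Rightarrow> nat) \<Rightarrow> bool" where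
  "revlex a b \<longleftrightarrow> (\<exists>i. a i < b i \<and> (\<forall>j>i. a j = b j))"

definition symfun :: "((nat \<Rightarrow> nat) \<Rightarrow> 'k::field) \<Rightarrow> bool" where
  "symfun q \<longleftrightarrow> (\<forall>e. infinite {i. e i \<noteq> 0} \<longrightarrow> q e = 0)
     \<and> (\<forall>e \<sigma>. bij \<sigma> \<longrightarrow> q (e \<circ> \<sigma>) = q e)
     \<and> (\<exists>d. \<forall>e. q e \<noteq> 0 \<longrightarrow> deg e \<le> d)"

text \<open>Symmetric functions in x with coefficients polynomial in y:
  G k e is the coefficient of y^k x^e.\<close>
definition polysym :: "(nat \<Rightarrow> (nat \<Rightarrow> nat) \<Rightarrow> 'k::field) \<Rightarrow> bool" where
  "polysym G \<longleftrightarrow> (\<forall>k. symfun (G k)) \<and> finite {k. G k \<noteq> (\<lambda>_. 0)}"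

definition sorts_to :: "(nat \<Rightarrow> nat) \<Rightarrow> (nat \<Rightarrow> nat) \<Rightarrow> bool" where
  "sorts_to e l \<longleftrightarrow> is_partition l \<and> (\<exists>\<sigma>. bij \<sigma> \<and> e \<circ> \<sigma> = l)"

definition msym :: "(nat \<Rightarrow> nat) \<Rightarrow> (nat \<Rightarrow> nat) \<Rightarrow> 'k::field" where
  "msym mu e = (if sorts_to e mu then 1 else 0)"

definition full_seq :: "((nat \<Rightarrow> nat) \<Rightarrow> (nat \<Rightarrow> nat) \<Rightarrow> 'k::field) \<Rightarrow> bool" where
  "full_seq p \<longleftrightarrow> (\<forall>l. is_partition l \<longrightarrow>
     (\<exists>b. b (conj_part l) \<noteq> 0 \<and>
        p l = (\<lambda>e. \<Sum>mu \<in> {mu. is_partition mu \<and> psize mu = psize l \<and>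
                               (mu = conj_part l \<or> revlex (conj_part l) mu)}.
                     b mu * msym mu e)))"

definition pvec :: "((nat \<Rightarrow> nat) \<Rightarrow> (nat \<Rightarrow> nat) \<Rightarrow> 'k::field) \<Rightarrow> (nat \<Rightarrow> int) \<Rightarrow> (nat \<Rightarrow> nat) \<Rightarrow> 'k" where
  "pvec p a = (if (\<forall>i. 0 \<le> a i) then p (THE l. sorts_to (nat \<circ> a) l) else (\<lambda>_. 0))"

text \<open>Symmetric shift by an indeterminate y: (E^y q) k e = coefficient of
  y^k x^e in q(y,x_1,x_2,...).\<close>
definition Ey :: "((nat \<Rightarrow> nat) \<Rightarrow> 'k::field) \<Rightarrow> nat \<Rightarrow> (nat \<Rightarrow> nat) \<Rightarrow> 'k" where
  "Ey q = (\<lambda>k e. q (case_nat k e))"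

text \<open>Symmetric shift by a scalar a: q(a,x_1,x_2,...).\<close>
definition Ea :: "'k::field \<Rightarrow> ((nat \<Rightarrow> nat) \<Rightarrow> 'k) \<Rightarrow> (nat \<Rightarrow> nat) \<Rightarrow> 'k" where
  "Ea a q = (\<lambda>e. \<Sum>k | q (case_nat k e) \<noteq> 0. a ^ k * q (case_nat k e))"

text \<open>Evaluation q(y,0,0,...), as polynomial in y (coefficient list by k).\<close>
definition evaly :: "((nat \<Rightarrow> nat) \<Rightarrow> 'k::field) \<Rightarrow> nat \<Rightarrow> 'k" where
  "evaly q = (\<lambda>k. q (case_nat k (\<lambda>_. 0)))"

text \<open>The integer vectors alpha for which both alpha and lambda - alpha are
  nonnegative; all other summands vanish by the convention p_alpha = 0.\<close>
definition sub_vecs :: "(nat \<Rightarrow> nat) \<Rightarrow> (nat \<Rightarrow> int) set" where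
  "sub_vecs l = {a. \<forall>i. 0 \<le> a i \<and> a i \<le> int (l i)}"

text \<open>Right-hand side  sum_alpha p_alpha(x) p_(lambda-alpha)(y,0,0,...).\<close>
definition dp_rhs :: "((nat \<Rightarrow> nat) \<Rightarrow> (nat \<Rightarrow> nat) \<Rightarrow> 'k::field) \<Rightarrow> (nat \<Rightarrow> nat) \<Rightarrow> nat \<Rightarrow> (nat \<Rightarrow> nat) \<Rightarrow> 'k" where
  "dp_rhs p l = (\<lambda>k e. \<Sum>a \<in> sub_vecs l.
       pvec p a e * evaly (pvec p (\<lambda>i. int (l i) - a i)) k)"

definition full_dps :: "((nat \<Rightarrow> nat) \<Rightarrow> (nat \<Rightarrow> nat) \<Rightarrow> 'k::field) \<Rightarrow> bool" where
  "full_dps p \<longleftrightarrow> full_seq p \<and> (\<forall>l. is_partition l \<longrightarrow> Ey (p l) = dp_rhs p l)"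

end

theory Submission
  imports Defs "HOL-Computational_Algebra.Polynomial" "HOL-Combinatorics.Transposition"
begin


definition supp :: "(nat \<Rightarrow> nat) \<Rightarrow> nat set" where
  "supp e = {i. e i \<noteq> 0}"

lemma sum_bound:
  assumes "\<forall>i\<ge>N. (f::nat\<Rightarrow>nat) i = 0"
  shows "sum f {i. f i \<noteq> 0} = (\<Sum>i<N. f i)"
proof -
  have "{i. f i \<noteq> 0} \<subseteq> {..<N}" using assms by (auto simp: not_less[symmetric])
  then show ?thesis
    by (intro sum.mono_neutral_left) auto
qed

lemma deg_bound: "\<forall>i\<ge>N. f i = 0 \<Longrightarrow> deg f = (\<Sum>i<N. f i)"
  unfolding deg_def by (rule sum_bound)

lemma psize_bound: "\<forall>i\<ge>N. f i = 0 \<Longrightarrow> psize f = (\<Sum>i<N. f i)"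
  unfolding psize_def by (rule sum_bound)

lemma finite_supp_bound:
  assumes "finite {i. (f::nat\<Rightarrow>nat) i \<noteq> 0}"
  obtains N where "\<forall>i\<ge>N. f i = 0"
proof -
  from assms obtain N where "\<forall>n\<in>{i. f i \<noteq> 0}. n < N"
    using finite_nat_set_iff_bounded by blast
  then show ?thesis using that by (meson leD mem_Collect_eq)
qed

lemma bound_finite_supp: "\<forall>i\<ge>N. (f::nat\<Rightarrow>nat) i = 0 \<Longrightarrow> finite {i. f i \<noteq> 0}"
  by (rule finite_subset[of _ "{..<N}"]) (auto simp: not_less[symmetric])

lemma supp_case_nat:
  "finite {i. case_nat j e i \<noteq> 0} \<longleftrightarrow> finite {i. (e::nat\<Rightarrow>nat) i \<noteq> 0}"
proof
  assume a: "finite {i. case_nat j e i \<noteq> 0}"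
  have eq: "{i. e i \<noteq> 0} = Suc -` {i. case_nat j e i \<noteq> 0}" by auto
  have "finite (Suc -` {i. case_nat j e i \<noteq> 0})" by (rule finite_vimageI[OF a]) simp
  then show "finite {i. e i \<noteq> 0}" by (simp only: eq)
next
  assume a: "finite {i. e i \<noteq> 0}"
  have "{i. case_nat j e i \<noteq> 0} \<subseteq> insert 0 (Suc ` {i. e i \<noteq> 0})"
  proof
    fix x assume "x \<in> {i. case_nat j e i \<noteq> 0}"
    then show "x \<in> insert 0 (Suc ` {i. e i \<noteq> 0})" by (cases x) auto
  qed
  then show "finite {i. case_nat j e i \<noteq> 0}" using a finite_subset by blast
qed

lemma deg_case_nat:
  assumes "finite {i. (e::nat\<Rightarrow>nat) i \<noteq> 0}"
  shows "deg (case_nat j e) = j + deg e"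
proof -
  obtain N where N: "\<forall>i\<ge>N. e i = 0" using assms finite_supp_bound by blast
  have N': "\<forall>i\<ge>Suc N. case_nat j e i = 0" using N by (auto split: nat.splits)
  have "deg (case_nat j e) = (\<Sum>i<Suc N. case_nat j e i)" using deg_bound[OF N'] .
  also have "\<dots> = j + (\<Sum>i<N. e i)" by (simp only: sum.lessThan_Suc_shift) simp
  also have "\<dots> = j + deg e" using deg_bound[OF N] by simp
  finally show ?thesis .
qed

lemma deg_comp_bij:
  assumes "bij \<sigma>"
  shows "deg (e \<circ> \<sigma>) = deg e"
proof -
  have inj: "inj \<sigma>" and surj: "surj \<sigma>" using bij_is_inj[OF assms] bij_is_surj[OF assms] by auto
  have img: "\<sigma> ` {i. e (\<sigma> i) \<noteq> 0} = {j. e j \<noteq> 0}"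
  proof -
    have eq: "{i. e (\<sigma> i) \<noteq> 0} = \<sigma> -` {j. e j \<noteq> 0}" by auto
    show ?thesis unfolding eq by (rule surj_image_vimage_eq[OF surj])
  qed
  have "deg (e \<circ> \<sigma>) = sum (e \<circ> \<sigma>) {i. e (\<sigma> i) \<noteq> 0}" by (simp add: deg_def)
  also have "\<dots> = sum e (\<sigma> ` {i. e (\<sigma> i) \<noteq> 0})"
    by (rule sum.reindex[symmetric]) (meson inj inj_on_subset subset_UNIV)
  finally show ?thesis using img by (simp add: deg_def)
qed

lemma finite_supp_comp_bij:
  assumes "bij \<sigma>"
  shows "finite {i. (e \<circ> \<sigma>) i \<noteq> 0} \<longleftrightarrow> finite {i. (e::nat\<Rightarrow>nat) i \<noteq> 0}"
proof -
  have inj: "inj \<sigma>" and surj: "surj \<sigma>" using bij_is_inj[OF assms] bij_is_surj[OF assms] by auto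
  have img: "\<sigma> ` {i. e (\<sigma> i) \<noteq> 0} = {j. e j \<noteq> 0}"
  proof -
    have eq: "{i. e (\<sigma> i) \<noteq> 0} = \<sigma> -` {j. e j \<noteq> 0}" by auto
    show ?thesis unfolding eq by (rule surj_image_vimage_eq[OF surj])
  qed
  have "finite {i. e (\<sigma> i) \<noteq> 0} \<longleftrightarrow> finite (\<sigma> ` {i. e (\<sigma> i) \<noteq> 0})"
    using finite_image_iff inj by (metis inj_on_subset subset_UNIV)
  then show ?thesis using img by simp
qed

lemma symfun_zero: "symfun (\<lambda>e. 0)"
  unfolding symfun_def by auto

lemma symfun_add:
  assumes "symfun q" "symfun r" shows "symfun (\<lambda>e. q e + r e)"
proof -
  obtain d1 where d1: "\<forall>e. q e \<noteq> 0 \<longrightarrow> deg e \<le> d1" using assms(1) symfun_def by blast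
  obtain d2 where d2: "\<forall>e. r e \<noteq> 0 \<longrightarrow> deg e \<le> d2" using assms(2) symfun_def by blast
  have "\<forall>e. q e + r e \<noteq> 0 \<longrightarrow> deg e \<le> max d1 d2"
    using d1 d2 by (metis add.right_neutral add_0 max.coboundedI1 max.coboundedI2)
  then show ?thesis using assms unfolding symfun_def by auto
qed

lemma symfun_smult:
  assumes "symfun q" shows "symfun (\<lambda>e. c * q e)"
  using assms unfolding symfun_def by auto

lemma symfun_sum:
  assumes "finite S" "\<forall>i\<in>S. symfun (g i)"
  shows "symfun (\<lambda>e. \<Sum>i\<in>S. w i * g i e)"
  using assms
proof (induction S rule: finite_induct)
  case empty then show ?case by (simp add: symfun_zero)
next
  case (insert x S)
  then show ?case
    using symfun_add[OF symfun_smult[of "g x" "w x"] insert.IH] by simp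
qed




lemma part_le_psize:
  assumes "is_partition mu" shows "mu i \<le> psize mu"
proof (cases "mu i = 0")
  case False
  have "finite {i. mu i \<noteq> 0}" using assms is_partition_def by blast
  then show ?thesis unfolding psize_def using False by (intro member_le_sum) auto
qed simp

lemma part_zero_beyond:
  assumes "is_partition mu" "psize mu \<le> i" shows "mu i = 0"
proof (rule ccontr)
  assume nz: "mu i \<noteq> 0"
  have dec: "\<forall>j. j \<le> i \<longrightarrow> mu i \<le> mu j" using assms(1) is_partition_def by blast
  have fin: "finite {i. mu i \<noteq> 0}" using assms is_partition_def by blast
  have sub: "{..i} \<subseteq> {i. mu i \<noteq> 0}" using dec nz by fastforce
  have "(\<Sum>j\<le>i. (1::nat)) \<le> (\<Sum>j\<le>i. mu j)"
    by (rule sum_mono) (use dec nz in fastforce)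
  also have "\<dots> \<le> psize mu" unfolding psize_def
    by (rule sum_mono2[OF fin sub]) simp
  finally show False using assms(2) by simp
qed

lemma finite_bounded_funs:
  "finite {f::nat\<Rightarrow>nat. \<forall>i. f i \<le> M \<and> (N \<le> i \<longrightarrow> f i = 0)}"
proof -
  let ?S = "{f::nat\<Rightarrow>nat. \<forall>i. f i \<le> M \<and> (N \<le> i \<longrightarrow> f i = 0)}"
  have inj: "inj_on (\<lambda>f. map f [0..<N]) ?S"
  proof (rule inj_onI)
    fix f g assume f: "f \<in> ?S" and g: "g \<in> ?S" and eq: "map f [0..<N] = map g [0..<N]"
    show "f = g"
    proof
      fix i show "f i = g i"
      proof (cases "i < N")
        case True then show ?thesis using eq by (metis map_eq_conv atLeastLessThan_iff set_upt zero_le)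
      next
        case False then show ?thesis using f g by auto
      qed
    qed
  qed
  have "(\<lambda>f. map f [0..<N]) ` ?S \<subseteq> {xs. set xs \<subseteq> {..M} \<and> length xs = N}" by auto
  moreover have "finite {xs. set xs \<subseteq> {..M} \<and> length xs = N}"
    by (rule finite_lists_length_eq) simp
  ultimately have "finite ((\<lambda>f. map f [0..<N]) ` ?S)" using finite_subset by blast
  then show ?thesis using finite_imageD inj by blast
qed

lemma finite_parts_le: "finite {mu. is_partition mu \<and> psize mu \<le> d}"
proof (rule finite_subset[OF _ finite_bounded_funs[of d d]])
  show "{mu. is_partition mu \<and> psize mu \<le> d} \<subseteq> {f. \<forall>i. f i \<le> d \<and> (d \<le> i \<longrightarrow> f i = 0)}"
    using part_le_psize part_zero_beyond by (fastforce intro: le_trans)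
qed

lemma finite_parts_eq: "finite {mu. is_partition mu \<and> psize mu = d}"
  by (rule finite_subset[OF _ finite_parts_le[of d]]) auto

lemma psize_zero:
  assumes "is_partition mu" "psize mu = 0" shows "mu = (\<lambda>_. 0)"
  using part_zero_beyond[OF assms(1)] assms(2) by auto

lemma down_closed_finite:
  assumes "finite (S::nat set)" "\<forall>x y. y \<le> x \<longrightarrow> x \<in> S \<longrightarrow> y \<in> S"
  shows "S = {..<card S}"
proof (cases "S = {}")
  case False
  let ?m = "Max S"
  have "?m \<in> S" using Max_in assms(1) False by blast
  then have "S = {..?m}" using assms Max_ge by blast
  then show ?thesis by (metis card_lessThan lessThan_Suc_atMost card_atMost)
qed simp

lemma conj_set:
  assumes "is_partition l"
  shows "{j. Suc i \<le> l j} = {..< conj_part l i}"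
proof -
  have fin: "finite {j. Suc i \<le> l j}"
    by (rule finite_subset[of _ "{i. l i \<noteq> 0}"]) (use assms is_partition_def in auto)
  have "\<forall>x y. y \<le> x \<longrightarrow> x \<in> {j. Suc i \<le> l j} \<longrightarrow> y \<in> {j. Suc i \<le> l j}"
    using assms is_partition_def by (auto intro: le_trans)
  then show ?thesis using down_closed_finite[OF fin] by (simp add: conj_part_def)
qed

lemma conj_mem: "is_partition l \<Longrightarrow> j < conj_part l i \<longleftrightarrow> i < l j"
  using conj_set[of l i] by (metis Suc_le_eq lessThan_iff mem_Collect_eq)

lemma conj_conj: assumes "is_partition l" shows "conj_part (conj_part l) = l"
proof
  fix j
  have "{i. Suc j \<le> conj_part l i} = {..< l j}" using conj_mem[OF assms] by (auto simp: Suc_le_eq)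
  then show "conj_part (conj_part l) j = l j" by (simp add: conj_part_def)
qed

lemma conj_zero_beyond: "is_partition l \<Longrightarrow> l 0 \<le> i \<Longrightarrow> conj_part l i = 0"
  using conj_mem[of l 0 i] is_partition_def
  by (metis gr_zeroI le0 leD le_trans)

lemma conj_partition: assumes "is_partition l" shows "is_partition (conj_part l)"
proof -
  have fin: "finite {j. Suc i \<le> l j}" for i
    by (rule finite_subset[of _ "{i. l i \<noteq> 0}"]) (use assms is_partition_def in auto)
  have "conj_part l j \<le> conj_part l i" if "i \<le> j" for i j
    unfolding conj_part_def by (rule card_mono[OF fin]) (use that in auto)
  moreover have "finite {i. conj_part l i \<noteq> 0}"
    using bound_finite_supp[of "l 0"] conj_zero_beyond[OF assms] by blast
  ultimately show ?thesis unfolding is_partition_def by blast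
qed

lemma psize_conj: assumes "is_partition l" shows "psize (conj_part l) = psize l"
proof -
  let ?N = "psize l" and ?M = "l 0"
  have lN: "\<forall>i\<ge>?N. l i = 0" using part_zero_beyond[OF assms] by blast
  have cM: "\<forall>i\<ge>?M. conj_part l i = 0" using conj_zero_beyond[OF assms] by blast
  have lM: "l i \<le> ?M" for i using assms is_partition_def by blast
  have "psize l = (\<Sum>i<?N. l i)" using psize_bound[OF lN] .
  also have "\<dots> = (\<Sum>i<?N. \<Sum>v<?M. if v < l i then 1 else 0)"
  proof (rule sum.cong[OF refl])
    fix i
    have "(\<Sum>v<?M. if v < l i then 1 else (0::nat)) = card ({..<?M} \<inter> {v. v < l i})"
      by (simp add: sum.If_cases)
    also have "{..<?M} \<inter> {v. v < l i} = {..<l i}" using lM[of i] by auto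
    finally show "l i = (\<Sum>v<?M. if v < l i then 1 else 0)" by simp
  qed
  also have "\<dots> = (\<Sum>v<?M. \<Sum>i<?N. if v < l i then 1 else 0)" by (rule sum.swap)
  also have "\<dots> = (\<Sum>v<?M. conj_part l v)"
  proof (rule sum.cong[OF refl])
    fix v
    have "(\<Sum>i<?N. if v < l i then 1 else (0::nat)) = card ({..<?N} \<inter> {i. v < l i})"
      by (simp add: sum.If_cases)
    also have "{..<?N} \<inter> {i. v < l i} = {i. Suc v \<le> l i}" using lN by (auto simp: Suc_le_eq not_le[symmetric])
    finally show "(\<Sum>i<?N. if v < l i then 1 else 0) = conj_part l v" by (simp add: conj_part_def)
  qed
  also have "\<dots> = psize (conj_part l)" using psize_bound[OF cM] by simp
  finally show ?thesis by simp
qed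

lemma conj_comp_bij:
  assumes "bij \<sigma>" shows "conj_part (e \<circ> \<sigma>) = conj_part e"
proof
  fix i
  have "bij_betw \<sigma> {j. Suc i \<le> e (\<sigma> j)} {j. Suc i \<le> e j}"
    using assms by (auto simp: bij_betw_def bij_def inj_on_def image_iff intro: bij_is_inj)
  then show "conj_part (e \<circ> \<sigma>) i = conj_part e i"
    unfolding conj_part_def using bij_betw_same_card by fastforce
qed

lemma sort_unique:
  assumes "sorts_to e mu" "sorts_to e nu" shows "mu = nu"
proof -
  obtain \<sigma> where s: "bij \<sigma>" "e \<circ> \<sigma> = mu" using assms(1) sorts_to_def by blast
  obtain \<tau> where t: "bij \<tau>" "e \<circ> \<tau> = nu" using assms(2) sorts_to_def by blast
  have "conj_part mu = conj_part nu" using conj_comp_bij s t by metis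
  then show ?thesis using conj_conj assms sorts_to_def by metis
qed

lemma the_sort: "sorts_to e mu \<Longrightarrow> (THE l. sorts_to e l) = mu"
  using sort_unique by blast




definition shiftext :: "(nat \<Rightarrow> nat) \<Rightarrow> nat \<Rightarrow> nat" where
  "shiftext \<sigma> = case_nat 0 (\<lambda>n. Suc (\<sigma> n))"

lemma bij_shiftext: assumes "bij \<sigma>" shows "bij (shiftext \<sigma>)"
proof (rule bijI)
  show "inj (shiftext \<sigma>)"
  proof (rule injI)
    fix x y assume "shiftext \<sigma> x = shiftext \<sigma> y"
    then show "x = y" using bij_is_inj[OF assms] unfolding shiftext_def
      by (cases x; cases y) (simp_all add: inj_eq)
  qed
  show "surj (shiftext \<sigma>)"
  proof -
    have "y \<in> range (shiftext \<sigma>)" for y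
    proof (cases y)
      case 0 then show ?thesis by (metis rangeI shiftext_def old.nat.simps(4))
    next
      case (Suc m)
      have "shiftext \<sigma> (Suc (inv \<sigma> m)) = y" using Suc surj_f_inv_f[OF bij_is_surj[OF assms]]
        by (simp add: shiftext_def)
      then show ?thesis by (metis rangeI)
    qed
    then show ?thesis by blast
  qed
qed

lemma case_nat_shiftext: "case_nat j e \<circ> shiftext \<sigma> = case_nat j (e \<circ> \<sigma>)"
  by (rule ext) (simp add: shiftext_def split: nat.splits)

lemma partition_case_nat:
  assumes "is_partition mu" "\<forall>i. mu i \<le> m"
  shows "is_partition (case_nat m mu)"
proof -
  have "\<forall>i j. i \<le> j \<longrightarrow> case_nat m mu j \<le> case_nat m mu i"
  proof (intro allI impI)
    fix i j :: nat assume "i \<le> j"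
    then show "case_nat m mu j \<le> case_nat m mu i"
      using assms unfolding is_partition_def by (cases i; cases j) auto
  qed
  moreover have "finite {i. case_nat m mu i \<noteq> 0}"
    using assms(1) supp_case_nat is_partition_def by blast
  ultimately show ?thesis unfolding is_partition_def by blast
qed

lemma sort_exists_aux:
  "\<forall>e::nat\<Rightarrow>nat. (\<forall>i\<ge>N. e i = 0) \<longrightarrow> (\<exists>\<sigma>. bij \<sigma> \<and> is_partition (e \<circ> \<sigma>))"
proof (induction N)
  case 0
  have "is_partition (\<lambda>_::nat. 0::nat)" unfolding is_partition_def by simp
  show ?case
  proof (intro allI impI)
    fix e :: "nat \<Rightarrow> nat" assume "\<forall>i\<ge>0. e i = 0"
    then have "e = (\<lambda>_. 0)" by auto
    then show "\<exists>\<sigma>. bij \<sigma> \<and> is_partition (e \<circ> \<sigma>)"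
      using \<open>is_partition (\<lambda>_::nat. 0::nat)\<close> by (intro exI[of _ id]) auto
  qed
next
  case (Suc N)
  show ?case
  proof (intro allI impI)
    fix e :: "nat \<Rightarrow> nat" assume bd: "\<forall>i\<ge>Suc N. e i = 0"
    define m where "m = Max (e ` {..N})"
    have "m \<in> e ` {..N}" unfolding m_def by (intro Max_in) auto
    then obtain i0 where i0: "i0 \<le> N" "e i0 = m" by auto
    have le_m: "e j \<le> m" for j
    proof (cases "j \<le> N")
      case True then show ?thesis unfolding m_def by (intro Max_ge) auto
    next
      case False then show ?thesis using bd by auto
    qed
    define \<tau> where "\<tau> = Transposition.transpose 0 i0"
    define e' where "e' = e \<circ> \<tau> \<circ> Suc"
    have "\<forall>i\<ge>N. e' i = 0"
    proof (intro allI impI)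
      fix i assume "N \<le> i"
      then have "\<tau> (Suc i) = Suc i" using i0 unfolding \<tau>_def by (simp add: transpose_apply_other)
      then show "e' i = 0" using bd \<open>N \<le> i\<close> unfolding e'_def by simp
    qed
    then obtain \<sigma>' where s': "bij \<sigma>'" "is_partition (e' \<circ> \<sigma>')" using Suc.IH by blast
    define \<sigma> where "\<sigma> = \<tau> \<circ> shiftext \<sigma>'"
    have bs: "bij \<sigma>" unfolding \<sigma>_def \<tau>_def by (rule bij_comp[OF bij_shiftext[OF s'(1)] bij_transpose])
    have eq: "e \<circ> \<sigma> = case_nat m (e' \<circ> \<sigma>')"
    proof (rule ext)
      fix x show "(e \<circ> \<sigma>) x = case_nat m (e' \<circ> \<sigma>') x"
      proof (cases x)
        case 0 then show ?thesis by (simp add: \<sigma>_def shiftext_def \<tau>_def i0)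
      next
        case (Suc n) then show ?thesis by (simp add: \<sigma>_def shiftext_def e'_def)
      qed
    qed
    have "is_partition (case_nat m (e' \<circ> \<sigma>'))"
      by (rule partition_case_nat[OF s'(2)]) (simp add: e'_def le_m)
    then show "\<exists>\<sigma>. bij \<sigma> \<and> is_partition (e \<circ> \<sigma>)" using bs eq by (intro exI[of _ \<sigma>]) simp
  qed
qed

lemma sort_exists:
  assumes "finite {i. (e::nat\<Rightarrow>nat) i \<noteq> 0}"
  obtains mu where "sorts_to e mu"
proof -
  obtain N where "\<forall>i\<ge>N. e i = 0" using finite_supp_bound[OF assms] by blast
  then obtain \<sigma> where "bij \<sigma>" "is_partition (e \<circ> \<sigma>)" using sort_exists_aux by blast
  then show ?thesis using that unfolding sorts_to_def by blast
qed

lemma sorts_to_finite: assumes "sorts_to e mu" shows "finite {i. e i \<noteq> 0}"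
proof -
  obtain \<sigma> where s: "is_partition mu" "bij \<sigma>" "e \<circ> \<sigma> = mu" using assms unfolding sorts_to_def by blast
  have "finite {i. (e \<circ> \<sigma>) i \<noteq> 0}" using s unfolding is_partition_def by simp
  then show ?thesis using finite_supp_comp_bij[OF s(2)] by simp
qed

lemma sorts_to_deg: assumes "sorts_to e mu" shows "deg e = psize mu"
proof -
  obtain \<sigma> where s: "is_partition mu" "bij \<sigma>" "e \<circ> \<sigma> = mu" using assms unfolding sorts_to_def by blast
  have "deg (e \<circ> \<sigma>) = deg e" by (rule deg_comp_bij[OF s(2)])
  then show ?thesis using s(3) unfolding deg_def psize_def by simp
qed

lemma sorts_to_comp:
  assumes "bij \<sigma>" shows "sorts_to (e \<circ> \<sigma>) mu \<longleftrightarrow> sorts_to e mu"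
proof
  assume "sorts_to (e \<circ> \<sigma>) mu"
  then obtain \<tau> where "is_partition mu" "bij \<tau>" "e \<circ> \<sigma> \<circ> \<tau> = mu" unfolding sorts_to_def by blast
  moreover have "bij (\<sigma> \<circ> \<tau>)" using assms \<open>bij \<tau>\<close> bij_comp by blast
  moreover have "e \<circ> (\<sigma> \<circ> \<tau>) = mu" using \<open>e \<circ> \<sigma> \<circ> \<tau> = mu\<close> by (simp add: comp_assoc)
  ultimately show "sorts_to e mu" unfolding sorts_to_def by blast
next
  assume "sorts_to e mu"
  then obtain \<tau> where t: "is_partition mu" "bij \<tau>" "e \<circ> \<tau> = mu" unfolding sorts_to_def by blast
  have si: "\<sigma> \<circ> inv \<sigma> = id" using surj_iff bij_is_surj assms by blast
  have "e \<circ> \<sigma> \<circ> (inv \<sigma> \<circ> \<tau>) = e \<circ> (\<sigma> \<circ> inv \<sigma>) \<circ> \<tau>" by (simp add: comp_assoc)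
  then have "e \<circ> \<sigma> \<circ> (inv \<sigma> \<circ> \<tau>) = mu" using t(3) si by simp
  moreover have "bij (inv \<sigma> \<circ> \<tau>)" using assms t(2) bij_comp bij_imp_bij_inv by blast
  ultimately show "sorts_to (e \<circ> \<sigma>) mu" using t(1) unfolding sorts_to_def by blast
qed

lemma symfun_msym: "symfun (msym mu :: (nat \<Rightarrow> nat) \<Rightarrow> 'k::field)"
proof -
  have "\<forall>e. infinite {i. e i \<noteq> 0} \<longrightarrow> (msym mu e :: 'k) = 0"
    using sorts_to_finite unfolding msym_def by auto
  moreover have "\<forall>e \<sigma>. bij \<sigma> \<longrightarrow> (msym mu (e \<circ> \<sigma>) :: 'k) = msym mu e"
    using sorts_to_comp unfolding msym_def by auto
  moreover have "\<forall>e. (msym mu e :: 'k) \<noteq> 0 \<longrightarrow> deg e \<le> psize mu"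
    using sorts_to_deg unfolding msym_def by (auto split: if_splits)
  ultimately show ?thesis unfolding symfun_def by blast
qed




lemma poly_coeffs_zero:
  fixes c :: "nat \<Rightarrow> 'k::field_char_0"
  assumes "\<forall>a. (\<Sum>j\<le>D. a ^ j * c j) = 0" "j \<le> D"
  shows "c j = 0"
proof -
  define P where "P = (\<Sum>i\<le>D. monom (c i) i)"
  have "poly P a = (\<Sum>i\<le>D. a ^ i * c i)" for a
    unfolding P_def by (simp add: poly_sum poly_monom mult.commute)
  then have "P = 0" using assms(1) poly_all_0_iff_0 by metis
  moreover have "coeff P j = c j"
    unfolding P_def using assms(2) by (simp add: coeff_sum coeff_monom)
  ultimately show ?thesis by simp
qed

definition Dsh :: "nat \<Rightarrow> ((nat \<Rightarrow> nat) \<Rightarrow> 'k) \<Rightarrow> (nat \<Rightarrow> nat) \<Rightarrow> 'k" where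
  "Dsh j q = (\<lambda>e. q (case_nat j e))"

lemma symfun_nz_finite: "symfun q \<Longrightarrow> q e \<noteq> 0 \<Longrightarrow> finite {i. e i \<noteq> 0}"
  unfolding symfun_def by blast

lemma symfun_D: assumes "symfun q" shows "symfun (Dsh j q)"
proof -
  obtain d where d: "\<forall>e. q e \<noteq> 0 \<longrightarrow> deg e \<le> d" using assms symfun_def by blast
  have "\<forall>e. infinite {i. e i \<noteq> 0} \<longrightarrow> Dsh j q e = 0"
    using assms supp_case_nat unfolding Dsh_def symfun_def by blast
  moreover have "\<forall>e \<sigma>. bij \<sigma> \<longrightarrow> Dsh j q (e \<circ> \<sigma>) = Dsh j q e"
  proof (intro allI impI)
    fix e and \<sigma> :: "nat \<Rightarrow> nat" assume "bij \<sigma>"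
    have "q (case_nat j e \<circ> shiftext \<sigma>) = q (case_nat j e)"
      using assms bij_shiftext[OF \<open>bij \<sigma>\<close>] unfolding symfun_def by blast
    then show "Dsh j q (e \<circ> \<sigma>) = Dsh j q e" unfolding Dsh_def case_nat_shiftext .
  qed
  moreover have "\<forall>e. Dsh j q e \<noteq> 0 \<longrightarrow> deg e \<le> d"
  proof (intro allI impI)
    fix e assume nz: "Dsh j q e \<noteq> 0"
    then have "finite {i. case_nat j e i \<noteq> 0}" using symfun_nz_finite[OF assms] unfolding Dsh_def by blast
    then have "finite {i. e i \<noteq> 0}" using supp_case_nat by blast
    then show "deg e \<le> d" using d nz deg_case_nat unfolding Dsh_def by fastforce
  qed
  ultimately show ?thesis unfolding symfun_def by blast
qed

lemma Ea_expand:
  assumes "symfun g" "\<forall>x. g x \<noteq> 0 \<longrightarrow> deg x \<le> d" "d \<le> D"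
  shows "Ea a g e = (\<Sum>j\<le>D. a ^ j * g (case_nat j e))"
proof -
  have sub: "{j. g (case_nat j e) \<noteq> 0} \<subseteq> {..D}"
  proof
    fix j assume "j \<in> {j. g (case_nat j e) \<noteq> 0}"
    then have nz: "g (case_nat j e) \<noteq> 0" by simp
    then have "finite {i. case_nat j e i \<noteq> 0}" using symfun_nz_finite[OF assms(1)] by blast
    then have "finite {i. e i \<noteq> 0}" using supp_case_nat by blast
    then show "j \<in> {..D}" using assms(2,3) nz deg_case_nat by fastforce
  qed
  show ?thesis unfolding Ea_def
    by (rule sum.mono_neutral_left) (use sub in auto)
qed

locale Fctx =
  fixes p :: "(nat \<Rightarrow> nat) \<Rightarrow> (nat \<Rightarrow> nat) \<Rightarrow> 'k::field_char_0"
    and F :: "((nat \<Rightarrow> nat) \<Rightarrow> 'k) \<Rightarrow> nat \<Rightarrow> (nat \<Rightarrow> nat) \<Rightarrow> 'k"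
  assumes full: "full_seq p"
    and F_range: "\<And>q. symfun q \<Longrightarrow> polysym (F q)"
    and F_add: "\<And>q r. symfun q \<Longrightarrow> symfun r \<Longrightarrow>
                  F (\<lambda>e. q e + r e) = (\<lambda>k e. F q k e + F r k e)"
    and F_smult: "\<And>c q. symfun q \<Longrightarrow> F (\<lambda>e. c * q e) = (\<lambda>k e. c * F q k e)"
    and F_shift_inv: "\<And>a q. symfun q \<Longrightarrow> F (Ea a q) = (\<lambda>k. Ea a (F q k))"
    and F_p: "\<And>l. is_partition l \<Longrightarrow> F (p l) = dp_rhs p l"
begin

lemma F_zero: "F (\<lambda>e. 0) = (\<lambda>k e. 0)"
  using F_smult[OF symfun_zero, of 0] by simp

lemma F_sum:
  assumes "finite S" "\<forall>i\<in>S. symfun (g i)"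
  shows "F (\<lambda>e. \<Sum>i\<in>S. w i * g i e) = (\<lambda>k e. \<Sum>i\<in>S. w i * F (g i) k e)"
  using assms
proof (induction S rule: finite_induct)
  case empty then show ?case by (simp add: F_zero)
next
  case (insert x S)
  have sx: "symfun (g x)" using insert.prems by simp
  have s1: "symfun (\<lambda>e. w x * g x e)" using symfun_smult[OF sx] .
  have s2: "symfun (\<lambda>e. \<Sum>i\<in>S. w i * g i e)" using insert.prems insert.hyps symfun_sum[of S g w] by simp
  have "F (\<lambda>e. \<Sum>i\<in>insert x S. w i * g i e) = F (\<lambda>e. w x * g x e + (\<Sum>i\<in>S. w i * g i e))"
    using insert by simp
  also have "\<dots> = (\<lambda>k e. F (\<lambda>e. w x * g x e) k e + F (\<lambda>e. \<Sum>i\<in>S. w i * g i e) k e)"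
    by (rule F_add[OF s1 s2])
  also have "\<dots> = (\<lambda>k e. \<Sum>i\<in>insert x S. w i * F (g i) k e)"
    using insert F_smult[OF sx] by simp
  finally show ?case .
qed

lemma F_symfun: "symfun q \<Longrightarrow> symfun (F q k)"
  using F_range polysym_def by blast

lemma F_commute:
  assumes q: "symfun q"
  shows "F (Dsh j q) k e = F q k (case_nat j e)"
proof -
  obtain d where d: "\<forall>e. q e \<noteq> 0 \<longrightarrow> deg e \<le> d" using q unfolding symfun_def by blast
  obtain d2 where d2: "\<forall>e. F q k e \<noteq> 0 \<longrightarrow> deg e \<le> d2" using F_symfun[OF q] unfolding symfun_def by blast
  define D where "D = max (max d d2) j"
  have dD: "d \<le> D" "d2 \<le> D" "j \<le> D" unfolding D_def by auto
  have "\<forall>a. (\<Sum>i\<le>D. a ^ i * (F (Dsh i q) k e - F q k (case_nat i e))) = 0"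
  proof
    fix a
    have eq1: "Ea a q = (\<lambda>e. \<Sum>i\<le>D. a ^ i * Dsh i q e)"
    proof (rule ext)
      fix e' show "Ea a q e' = (\<Sum>i\<le>D. a ^ i * Dsh i q e')"
        using Ea_expand[OF q d dD(1)] by (simp add: Dsh_def)
    qed
    have eq2: "F (\<lambda>e. \<Sum>i\<le>D. a ^ i * Dsh i q e) = (\<lambda>k e. \<Sum>i\<le>D. a ^ i * F (Dsh i q) k e)"
      by (rule F_sum) (auto intro: symfun_D[OF q])
    have L: "F (Ea a q) k e = (\<Sum>i\<le>D. a ^ i * F (Dsh i q) k e)"
      unfolding eq1 eq2 by simp
    have "F (Ea a q) k e = Ea a (F q k) e" using F_shift_inv[OF q] by simp
    also have "\<dots> = (\<Sum>i\<le>D. a ^ i * F q k (case_nat i e))"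
      by (rule Ea_expand[OF F_symfun[OF q] d2 dD(2)])
    finally have R: "F (Ea a q) k e = (\<Sum>i\<le>D. a ^ i * F q k (case_nat i e))" .
    show "(\<Sum>i\<le>D. a ^ i * (F (Dsh i q) k e - F q k (case_nat i e))) = 0"
      using L R by (simp add: right_diff_distrib sum_subtractf)
  qed
  then have "F (Dsh j q) k e - F q k (case_nat j e) = 0"
    by (rule poly_coeffs_zero) (rule dD(3))
  then show ?thesis by simp
qed

end




lemma revlex_irrefl: "\<not> revlex a a"
  unfolding revlex_def by auto

lemma revlex_trans: assumes "revlex a b" "revlex b c" shows "revlex a c"
proof -
  obtain i where i: "a i < b i" "\<forall>j>i. a j = b j" using assms(1) revlex_def by blast
  obtain j where j: "b j < c j" "\<forall>k>j. b k = c k" using assms(2) revlex_def by blast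
  show ?thesis unfolding revlex_def
  proof (cases i j rule: linorder_cases)
    case less
    then show "\<exists>i. a i < c i \<and> (\<forall>j>i. a j = c j)" using i j by (intro exI[of _ j]) auto
  next
    case equal
    then show "\<exists>i. a i < c i \<and> (\<forall>j>i. a j = c j)" using i j by (intro exI[of _ j]) auto
  next
    case greater
    then show "\<exists>i. a i < c i \<and> (\<forall>j>i. a j = c j)" using i j by (intro exI[of _ i]) auto
  qed
qed

abbreviation zz :: "nat \<Rightarrow> nat" where "zz \<equiv> (\<lambda>_. 0)"

lemma zz_partition: "is_partition zz"
  unfolding is_partition_def by simp

lemma psize_zz: "psize zz = 0" unfolding psize_def by simp

lemma conj_zz: "conj_part zz = zz" unfolding conj_part_def by simp

lemma sorts_to_zz: "sorts_to zz zz"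
  unfolding sorts_to_def using zz_partition by (intro conjI exI[of _ id]) auto

lemma sorts_to_self: "is_partition l \<Longrightarrow> sorts_to l l"
  unfolding sorts_to_def by (intro conjI exI[of _ id]) auto

lemma sorts_to_zz_iff: "sorts_to zz mu \<Longrightarrow> mu = zz"
  unfolding sorts_to_def by auto

lemma comp_bij_zz: assumes "bij \<sigma>" "e \<circ> \<sigma> = zz" shows "e = zz"
proof
  fix i
  have "e (\<sigma> (inv \<sigma> i)) = 0" using assms(2) by (metis comp_apply)
  then show "e i = 0" using surj_f_inv_f[OF bij_is_surj[OF assms(1)]] by simp
qed

context Fctx
begin

definition cc where "cc = p zz zz"

definition Sset where
  "Sset l = {mu. is_partition mu \<and> psize mu = psize l \<and> (mu = conj_part l \<or> revlex (conj_part l) mu)}"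

lemma full_rep:
  assumes "is_partition l"
  obtains b where "b (conj_part l) \<noteq> 0" "p l = (\<lambda>e. \<Sum>mu\<in>Sset l. b mu * msym mu e)"
  using full assms unfolding full_seq_def Sset_def by blast

lemma finite_Sset: "finite (Sset l)"
  by (rule finite_subset[OF _ finite_parts_eq[of "psize l"]]) (auto simp: Sset_def)

lemma p_symfun: "is_partition l \<Longrightarrow> symfun (p l)"
proof -
  assume l: "is_partition l"
  obtain b where b: "p l = (\<lambda>e. \<Sum>mu\<in>Sset l. b mu * msym mu e)" using full_rep[OF l] by blast
  show ?thesis unfolding b by (rule symfun_sum[OF finite_Sset]) (simp add: symfun_msym)
qed

lemma Sset_zz: "Sset zz = {zz}"
proof
  show "Sset zz \<subseteq> {zz}"
  proof
    fix mu assume "mu \<in> Sset zz"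
    then have "is_partition mu" "psize mu = 0" unfolding Sset_def psize_zz by auto
    then show "mu \<in> {zz}" using psize_zero by blast
  qed
  show "{zz} \<subseteq> Sset zz" unfolding Sset_def using zz_partition conj_zz by simp
qed

lemma cc_nz: "cc \<noteq> 0"
proof -
  obtain b where b: "b (conj_part zz) \<noteq> 0" "p zz = (\<lambda>e. \<Sum>mu\<in>Sset zz. b mu * msym mu e)"
    using full_rep[OF zz_partition] by blast
  have "p zz zz = b zz" using b(2) Sset_zz sorts_to_zz by (simp add: msym_def)
  then show ?thesis using b(1) conj_zz cc_def by simp
qed

lemma p_at_zz:
  assumes "is_partition mu" "mu \<noteq> zz" shows "p mu zz = 0"
proof -
  obtain b where b: "p mu = (\<lambda>e. \<Sum>nu\<in>Sset mu. b nu * msym nu e)"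
    using full_rep[OF assms(1)] by blast
  have "msym nu zz = (0::'k)" if "nu \<in> Sset mu" for nu
  proof (rule ccontr)
    assume "msym nu zz \<noteq> (0::'k)"
    then have "nu = zz" using sorts_to_zz_iff unfolding msym_def by (auto split: if_splits)
    then have "psize mu = 0" using that psize_zz unfolding Sset_def by simp
    then show False using psize_zero assms by blast
  qed
  then show ?thesis using b by simp
qed

lemma finite_sub_vecs:
  assumes "is_partition l" shows "finite (sub_vecs l)"
proof -
  let ?N = "psize l"
  have bd: "\<forall>a\<in>sub_vecs l. \<forall>i. 0 \<le> a i \<and> a i \<le> int ?N \<and> (?N \<le> i \<longrightarrow> a i = 0)"
  proof (intro ballI allI conjI impI)
    fix a i assume a: "a \<in> sub_vecs l"
    then show "0 \<le> a i" unfolding sub_vecs_def by simp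
    have "a i \<le> int (l i)" using a unfolding sub_vecs_def by simp
    also have "\<dots> \<le> int ?N" using part_le_psize[OF assms] by simp
    finally show "a i \<le> int ?N" .
    assume "?N \<le> i"
    then have "l i = 0" using part_zero_beyond[OF assms] by simp
    moreover have "a i \<le> int (l i)" "0 \<le> a i" using a unfolding sub_vecs_def by auto
    ultimately show "a i = 0" by simp
  qed
  have inj: "inj_on (\<lambda>a. map a [0..<?N]) (sub_vecs l)"
  proof (rule inj_onI)
    fix f g assume f: "f \<in> sub_vecs l" and g: "g \<in> sub_vecs l" and eq: "map f [0..<?N] = map g [0..<?N]"
    show "f = g"
    proof
      fix i show "f i = g i"
      proof (cases "i < ?N")
        case True then show ?thesis using eq by (metis map_eq_conv atLeastLessThan_iff set_upt zero_le)
      next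
        case False
        then have "?N \<le> i" by simp
        then have "f i = 0" "g i = 0" using bd f g by blast+
        then show ?thesis by simp
      qed
    qed
  qed
  have "(\<lambda>a. map a [0..<?N]) ` sub_vecs l \<subseteq> {xs. set xs \<subseteq> {0..int ?N} \<and> length xs = ?N}"
  proof (rule image_subsetI)
    fix a assume a: "a \<in> sub_vecs l"
    have "set (map a [0..<?N]) \<subseteq> {0..int ?N}"
    proof
      fix x assume "x \<in> set (map a [0..<?N])"
      then obtain i where "x = a i" by auto
      then show "x \<in> {0..int ?N}" using bd a by simp
    qed
    then show "map a [0..<?N] \<in> {xs. set xs \<subseteq> {0..int ?N} \<and> length xs = ?N}" by simp
  qed
  moreover have "finite {xs. set xs \<subseteq> {0..int ?N} \<and> length xs = ?N}"
    by (rule finite_lists_length_eq) simp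
  ultimately have "finite ((\<lambda>a. map a [0..<?N]) ` sub_vecs l)" using finite_subset by blast
  then show ?thesis using finite_imageD inj by blast
qed

lemma B1:
  assumes l: "is_partition l"
  shows "F (p l) k zz = cc * p l (case_nat k zz)"
proof -
  let ?a0 = "\<lambda>i::nat. 0::int"
  let ?t = "\<lambda>a. pvec p a zz * evaly (pvec p (\<lambda>i. int (l i) - a i)) k"
  have a0: "?a0 \<in> sub_vecs l" unfolding sub_vecs_def by simp
  have others: "?t a = 0" if a: "a \<in> sub_vecs l - {?a0}" for a
  proof -
    have nn: "\<forall>i. 0 \<le> a i" "\<forall>i. a i \<le> int (l i)" using a unfolding sub_vecs_def by auto
    have "{i. (nat \<circ> a) i \<noteq> 0} \<subseteq> {i. l i \<noteq> 0}"
    proof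
      fix i assume "i \<in> {i. (nat \<circ> a) i \<noteq> 0}"
      then have "0 < a i" by simp
      then have "0 < int (l i)" using nn(2) by (meson less_le_trans)
      then show "i \<in> {i. l i \<noteq> 0}" by simp
    qed
    then have "finite {i. (nat \<circ> a) i \<noteq> 0}" using l finite_subset unfolding is_partition_def by blast
    then obtain mu where mu: "sorts_to (nat \<circ> a) mu" using sort_exists by blast
    have "mu \<noteq> zz"
    proof
      assume "mu = zz"
      then obtain \<sigma> where "bij \<sigma>" "(nat \<circ> a) \<circ> \<sigma> = zz" using mu unfolding sorts_to_def by blast
      then have "nat \<circ> a = zz" using comp_bij_zz by blast
      then have "a = ?a0" using nn(1) by (intro ext) (metis comp_apply nat_0_iff order_antisym_conv)
      then show False using a by simp
    qed
    moreover have "is_partition mu" using mu sorts_to_def by blast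
    ultimately have "p mu zz = 0" using p_at_zz by blast
    then have "pvec p a zz = 0" using nn(1) the_sort[OF mu] unfolding pvec_def by simp
    then show ?thesis by simp
  qed
  have t0: "?t ?a0 = cc * p l (case_nat k zz)"
  proof -
    have e1: "nat \<circ> ?a0 = zz" by (rule ext) simp
    have e2: "nat \<circ> (\<lambda>i. int (l i) - ?a0 i) = l" by (rule ext) simp
    have "pvec p ?a0 = p zz" unfolding pvec_def e1 using the_sort[OF sorts_to_zz] by simp
    moreover have "pvec p (\<lambda>i. int (l i) - ?a0 i) = p l"
      unfolding pvec_def e2 using the_sort[OF sorts_to_self[OF l]] by simp
    ultimately show ?thesis by (simp add: cc_def evaly_def)
  qed
  have "F (p l) k zz = (\<Sum>a\<in>sub_vecs l. ?t a)" using F_p[OF l] by (simp add: dp_rhs_def)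
  also have "\<dots> = ?t ?a0 + (\<Sum>a\<in>sub_vecs l - {?a0}. ?t a)"
    by (rule sum.remove[OF finite_sub_vecs[OF l] a0])
  also have "(\<Sum>a\<in>sub_vecs l - {?a0}. ?t a) = 0" by (rule sum.neutral) (use others in blast)
  finally show ?thesis using t0 by simp
qed

end




context Fctx
begin

definition Up where
  "Up mu = {nu. is_partition nu \<and> psize nu = psize mu \<and> revlex mu nu}"

lemma finite_Up: "finite (Up mu)"
  by (rule finite_subset[OF _ finite_parts_eq[of "psize mu"]]) (auto simp: Up_def)

lemma B2:
  assumes "is_partition mu"
  shows "F (msym mu) k zz = cc * msym mu (case_nat k zz)"
  using assms
proof (induction mu rule: measure_induct_rule[where f = "\<lambda>mu. card (Up mu)"])
  case (less mu)
  let ?Phi = "\<lambda>nu. F (msym nu) k zz - cc * msym nu (case_nat k zz)"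
  have IH: "?Phi nu = 0" if nu: "nu \<in> Up mu" for nu
  proof -
    have sub: "Up nu \<subseteq> Up mu" using nu revlex_trans unfolding Up_def by auto
    have "nu \<notin> Up nu" using revlex_irrefl unfolding Up_def by auto
    then have "Up nu \<subset> Up mu" using sub nu by blast
    then have "card (Up nu) < card (Up mu)" by (rule psubset_card_mono[OF finite_Up])
    moreover have "is_partition nu" using nu Up_def by simp
    ultimately show ?thesis using less.IH by simp
  qed
  define l where "l = conj_part mu"
  have l: "is_partition l" unfolding l_def by (rule conj_partition[OF less.prems])
  have cl: "conj_part l = mu" unfolding l_def by (rule conj_conj[OF less.prems])
  have pl: "psize l = psize mu" unfolding l_def by (rule psize_conj[OF less.prems])
  obtain b where b: "b mu \<noteq> 0" "p l = (\<lambda>e. \<Sum>nu\<in>Sset l. b nu * msym nu e)"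
    using full_rep[OF l] cl by metis
  have mS: "mu \<in> Sset l" unfolding Sset_def using cl pl less.prems by simp
  have SU: "Sset l - {mu} = Up mu" unfolding Sset_def Up_def using cl pl revlex_irrefl by auto
  have Fs: "F (\<lambda>e. \<Sum>nu\<in>Sset l. b nu * msym nu e) = (\<lambda>k e. \<Sum>nu\<in>Sset l. b nu * F (msym nu) k e)"
    by (rule F_sum[OF finite_Sset]) (simp add: symfun_msym)
  have "F (p l) k zz = (\<Sum>nu\<in>Sset l. b nu * F (msym nu) k zz)"
    unfolding b(2) Fs by simp
  moreover have "p l (case_nat k zz) = (\<Sum>nu\<in>Sset l. b nu * msym nu (case_nat k zz))"
    unfolding b(2) by simp
  ultimately have "(\<Sum>nu\<in>Sset l. b nu * ?Phi nu) = 0"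
    using B1[OF l, of k] by (simp add: right_diff_distrib sum_subtractf sum_distrib_left mult.left_commute)
  moreover have "(\<Sum>nu\<in>Sset l. b nu * ?Phi nu) = b mu * ?Phi mu + (\<Sum>nu\<in>Sset l - {mu}. b nu * ?Phi nu)"
    by (rule sum.remove[OF finite_Sset mS])
  moreover have "(\<Sum>nu\<in>Sset l - {mu}. b nu * ?Phi nu) = 0"
    by (rule sum.neutral) (use IH SU in simp)
  ultimately have "b mu * ?Phi mu = 0" by simp
  then show ?case using b(1) by simp
qed

lemma B3:
  assumes r: "symfun r"
  shows "F r k zz = cc * r (case_nat k zz)"
proof -
  obtain d where d: "\<forall>e. r e \<noteq> 0 \<longrightarrow> deg e \<le> d" using r unfolding symfun_def by blast
  define P where "P = {mu. is_partition mu \<and> psize mu \<le> d}"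
  have finP: "finite P" unfolding P_def by (rule finite_parts_le)
  have rep: "r e = (\<Sum>mu\<in>P. r mu * msym mu e)" for e
  proof (cases "finite {i. e i \<noteq> 0}")
    case False
    then have "r e = 0" using r unfolding symfun_def by blast
    moreover have "msym mu e = (0::'k)" for mu using sorts_to_finite False unfolding msym_def by auto
    ultimately show ?thesis by simp
  next
    case True
    then obtain mu0 where mu0: "sorts_to e mu0" using sort_exists by blast
    then obtain \<sigma> where s: "is_partition mu0" "bij \<sigma>" "e \<circ> \<sigma> = mu0" unfolding sorts_to_def by blast
    have re: "r e = r mu0" using r s unfolding symfun_def by metis
    have ms: "msym mu e = (if mu = mu0 then 1 else (0::'k))" for mu
      using mu0 sort_unique unfolding msym_def by auto
    have "(\<Sum>mu\<in>P. r mu * msym mu e) = (\<Sum>mu\<in>P. if mu = mu0 then r mu0 else 0)"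
      by (rule sum.cong[OF refl]) (simp add: ms)
    also have "\<dots> = (if mu0 \<in> P then r mu0 else 0)" using finP by (simp add: sum.delta')
    also have "\<dots> = r mu0"
    proof (cases "mu0 \<in> P")
      case False
      then have "\<not> deg mu0 \<le> d" using s(1) unfolding P_def deg_def psize_def by simp
      then have "r mu0 = 0" using d by blast
      then show ?thesis by simp
    qed simp
    finally show ?thesis using re by simp
  qed
  have rr: "r = (\<lambda>e. \<Sum>mu\<in>P. r mu * msym mu e)" using rep by (rule ext)
  have Fs: "F (\<lambda>e. \<Sum>mu\<in>P. r mu * msym mu e) = (\<lambda>k e. \<Sum>mu\<in>P. r mu * F (msym mu) k e)"
    by (rule F_sum[OF finP]) (simp add: symfun_msym)
  have "F r k zz = (\<Sum>mu\<in>P. r mu * F (msym mu) k zz)"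
    by (subst rr, unfold Fs) simp
  also have "\<dots> = (\<Sum>mu\<in>P. r mu * (cc * msym mu (case_nat k zz)))"
    by (rule sum.cong[OF refl]) (simp add: B2 P_def)
  also have "\<dots> = cc * r (case_nat k zz)"
    by (subst rep[of "case_nat k zz"]) (simp add: sum_distrib_left mult.left_commute)
  finally show ?thesis .
qed

lemma stepC:
  "\<forall>e. (\<forall>i\<ge>N. e i = 0) \<longrightarrow> (\<forall>q. symfun q \<longrightarrow> F q k e = cc * q (case_nat k e))"
proof (induction N)
  case 0
  show ?case
  proof (intro allI impI)
    fix e :: "nat \<Rightarrow> nat" and q :: "(nat \<Rightarrow> nat) \<Rightarrow> 'k" assume "\<forall>i\<ge>0. e i = (0::nat)" "symfun q"
    moreover then have "e = zz" by auto
    ultimately show "F q k e = cc * q (case_nat k e)" using B3 by simp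
  qed
next
  case (Suc N)
  show ?case
  proof (intro allI impI)
    fix e :: "nat \<Rightarrow> nat" and q :: "(nat \<Rightarrow> nat) \<Rightarrow> 'k" assume e: "\<forall>i\<ge>Suc N. e i = (0::nat)" and q: "symfun q"
    define j where "j = e 0"
    define e' where "e' = e \<circ> Suc"
    have ee: "e = case_nat j e'"
    proof
      fix x show "e x = case_nat j e' x" by (cases x) (simp_all add: j_def e'_def)
    qed
    have e': "\<forall>i\<ge>N. e' i = 0" using e unfolding e'_def by simp
    have "F q k e = F (Dsh j q) k e'" unfolding ee by (rule F_commute[OF q, symmetric])
    also have "\<dots> = cc * Dsh j q (case_nat k e')" using Suc.IH e' symfun_D[OF q] by blast
    also have "Dsh j q (case_nat k e') = q (case_nat k (case_nat j e'))"
    proof -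
      define \<tau> where "\<tau> = Transposition.transpose (0::nat) 1"
      have "case_nat j (case_nat k e') \<circ> \<tau> = case_nat k (case_nat j e')"
      proof
        fix x show "(case_nat j (case_nat k e') \<circ> \<tau>) x = case_nat k (case_nat j e') x"
          unfolding \<tau>_def
          by (cases x rule: nat.exhaust[case_product nat.exhaust]) (auto split: nat.splits simp: transpose_def)
      qed
      moreover have "q (case_nat j (case_nat k e') \<circ> \<tau>) = q (case_nat j (case_nat k e'))"
        using q unfolding symfun_def \<tau>_def by (meson bij_transpose)
      ultimately show ?thesis unfolding Dsh_def by simp
    qed
    finally show "F q k e = cc * q (case_nat k e)" unfolding ee .
  qed
qed

lemma F_is_Ey:
  assumes q: "symfun q"
  shows "F q = (\<lambda>k e. cc * Ey q k e)"
proof (intro ext)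
  fix k e
  show "F q k e = cc * Ey q k e"
  proof (cases "finite {i. e i \<noteq> 0}")
    case True
    then obtain N where "\<forall>i\<ge>N. e i = 0" using finite_supp_bound by blast
    then show ?thesis using stepC q by (simp add: Ey_def)
  next
    case False
    then have "F q k e = 0" using F_symfun[OF q] unfolding symfun_def by blast
    moreover have "q (case_nat k e) = 0" using False q supp_case_nat unfolding symfun_def by blast
    ultimately show ?thesis by (simp add: Ey_def)
  qed
qed

lemma final_dps: "full_dps (\<lambda>l e. p l e / cc)"
proof -
  have fs: "full_seq (\<lambda>l e. p l e / cc)"
    unfolding full_seq_def
  proof (intro allI impI)
    fix l assume l: "is_partition l"
    obtain b where b: "b (conj_part l) \<noteq> 0" "p l = (\<lambda>e. \<Sum>mu\<in>Sset l. b mu * msym mu e)"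
      using full_rep[OF l] by blast
    have "(\<lambda>e. p l e / cc) = (\<lambda>e. \<Sum>mu\<in>Sset l. (b mu / cc) * msym mu e)"
      unfolding b(2) by (simp add: sum_divide_distrib)
    then show "\<exists>b. b (conj_part l) \<noteq> 0 \<and>
        (\<lambda>e. p l e / cc) = (\<lambda>e. \<Sum>mu \<in> {mu. is_partition mu \<and> psize mu = psize l \<and>
                               (mu = conj_part l \<or> revlex (conj_part l) mu)}. b mu * msym mu e)"
      using b(1) cc_nz unfolding Sset_def by (intro exI[of _ "\<lambda>mu. b mu / cc"]) simp
  qed
  have pv: "pvec (\<lambda>l e. p l e / cc) a = (\<lambda>e. pvec p a e / cc)" for a
    unfolding pvec_def by auto
  have ev: "evaly (\<lambda>e. f e / cc) k = evaly f k / cc" for f k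
    unfolding evaly_def by simp
  have "Ey (\<lambda>e. p l e / cc) = dp_rhs (\<lambda>l e. p l e / cc) l" if l: "is_partition l" for l
  proof (intro ext)
    fix k e
    have "dp_rhs (\<lambda>l e. p l e / cc) l k e = dp_rhs p l k e / (cc * cc)"
      unfolding dp_rhs_def pv ev by (simp add: sum_divide_distrib)
    also have "\<dots> = F (p l) k e / (cc * cc)" using F_p[OF l] by simp
    also have "\<dots> = Ey (p l) k e / cc" using F_is_Ey[OF p_symfun[OF l]] cc_nz by simp
    finally show "Ey (\<lambda>e. p l e / cc) k e = dp_rhs (\<lambda>l e. p l e / cc) l k e"
      by (simp add: Ey_def)
  qed
  then show ?thesis using fs unfolding full_dps_def by blast
qed

end


theorem theorem3:
  fixes p :: "(nat \<Rightarrow> nat) \<Rightarrow> (nat \<Rightarrow> nat) \<Rightarrow> 'k::field_char_0"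
    and F :: "((nat \<Rightarrow> nat) \<Rightarrow> 'k) \<Rightarrow> nat \<Rightarrow> (nat \<Rightarrow> nat) \<Rightarrow> 'k"
  assumes full: "full_seq p"
    and F_range: "\<And>q. symfun q \<Longrightarrow> polysym (F q)"
    and F_add: "\<And>q r. symfun q \<Longrightarrow> symfun r \<Longrightarrow>
                  F (\<lambda>e. q e + r e) = (\<lambda>k e. F q k e + F r k e)"
    and F_smult: "\<And>c q. symfun q \<Longrightarrow> F (\<lambda>e. c * q e) = (\<lambda>k e. c * F q k e)"
    and F_shift_inv: "\<And>a q. symfun q \<Longrightarrow> F (Ea a q) = (\<lambda>k. Ea a (F q k))"
    and F_p: "\<And>l. is_partition l \<Longrightarrow> F (p l) = dp_rhs p l"
  shows "\<exists>c. c \<noteq> 0 \<and> (\<forall>q. symfun q \<longrightarrow> F q = (\<lambda>k e. c * Ey q k e))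
             \<and> full_dps (\<lambda>l e. p l e / c)"
proof -
  interpret Fctx p F
    by unfold_locales (fact full F_range F_add F_smult F_shift_inv F_p)+
  show ?thesis using cc_nz F_is_Ey final_dps by blast
qed

end
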